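(* Let $(\bar x,\bar y)$ be a local minimax point of $\min_{x\in X}\max_{y\in Y}f(x,y)$ and suppose $f$ is twice semidifferentiable at $(\bar x,\bar y)$. If for every $h\in T_Y(\bar y)\setminus\{0\}$, $$\mathrm{d}^2_{yy}f(\bar x,\bar y)(h)-\mathrm{d}^2\delta_{X\times Y}\big((\bar x,\bar y);\mathrm{d}f(\bar x,\bar y)\big)(0,h)<0,$$ then $(\bar x,\bar y)$ is a calm local minimax point.
   Context: $X\subseteq\mathbb{R}^n$, $Y\subseteq\mathbb{R}^m$ nonempty closed, $f:\mathbb{R}^n\times\mathbb{R}^m\to\mathbb{R}$; $\mathbb{B}_\epsilon(z)$ closed Euclidean ball. Standing assumption: for every $x\in X$, $\bar y\in Y$, $\epsilon\ge0$ the maximum of $f(x,\cdot)$ over $Y\cap\mathbb{B}_\epsilon(\bar y)$ is attained. A radius function is $\tau:[0,\infty)\to[0,\infty)$ with $\tau(0)=0$, $\tau(\delta)\to0$ as $\delta\downarrow0$; calm at $0$ if $\tau(\delta)\le\kappa\delta$ for all $\delta\in[0,\delta_1]$ for some $\kappa,\delta_1>0$. $(\bar x,\bar y)\in X\times Y$ is a local minimax point if there exist $\delta_0>0$ and a radius function $\tau$ with $f(\bar x,y)\le f(\bar x,\bar y)\le\max_{y'\in Y\cap\mathbb{B}_{\tau(\delta)}(\bar y)}f(x,y')$ for all $\delta\in(0,\delta_0]$, $x\in X\cap\mathbb{B}_\delta(\bar x)$, $y\in Y\cap\mathbb{B}_\delta(\bar y)$; calm local minimax if moreover $\tau$ can be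 taken calm at $0$. Variational notation: for $\psi:\mathbb{R}^r\to\mathbb{R}$, $\mathrm{d}\psi(\bar z)(w):=\liminf_{t\downarrow0,w'\to w}\frac{\psi(\bar z+tw')-\psi(\bar z)}{t}$; $\psi$ is semidifferentiable at $\bar z$ if for each $w$ this is a limit (real-valued); $\mathrm{d}^2\psi(\bar z)(w):=\liminf_{t\downarrow0,w'\to w}\frac{\psi(\bar z+tw')-\psi(\bar z)-t\,\mathrm{d}\psi(\bar z)(w')}{\frac12t^2}$; $\psi$ is twice semidifferentiable at $\bar z$ if it is semidifferentiable there and for each $w$ this liminf is a limit (real-valued). $\mathrm{d}f(\bar x,\bar y)(u,h)$ is the subderivative of $f$ at $(\bar x,\bar y)$ in direction $(u,h)$, and $\mathrm{d}^2_{yy}f(\bar x,\bar y)(h)$ is the second subderivative of $f(\bar x,\cdot)$ at $\bar y$. $T_S(\bar z)$ is the tangent cone ($w\in T_S(\bar z)$ iff $\exists t_k\downarrow0$, $w_k\to w$ with $\bar z+t_kw_k\in S$). For closed $S$, $\bar z\in S$, $\varphi:\mathbb{R}^r\to\mathbb{R}$: $\mathrm{d}^2\delta_S(\bar z;\varphi)(w):=\liminf_{t\downarrow0,\,w'\to w,\ \bar z+tw'\in S}\frac{-2\varphi(w')}{t}$ ($+\infty$ if no such $t,w'$). Thus $\mathrm{d}^2\delta_{X\times Y}((\bar x,\bar y);\mathrm{d}f(\bar x,\bar y))(0,h)=\liminf_{t\downarrow0,\,(u',h')\to(0,h),\ \bar x+tu'\in X,\ \bar y+th'\in Y}\frac{-2\,\mathrm{d}f(\bar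 x,\bar y)(u',h')}{t}$. *)

theory Defs
  imports "HOL-Analysis.Analysis"
begin

definition radius_function :: "(real \<Rightarrow> real) \<Rightarrow> bool" where
  "radius_function \<tau> \<longleftrightarrow>
     (\<forall>\<delta>\<ge>0. \<tau> \<delta> \<ge> 0) \<and> \<tau> 0 = 0 \<and> (\<tau> \<longlongrightarrow> 0) (at_right 0)"

definition calm_at_0 :: "(real \<Rightarrow> real) \<Rightarrow> bool" where
  "calm_at_0 \<tau> \<longleftrightarrow> (\<exists>\<kappa>>0. \<exists>\<delta>1>0. \<forall>\<delta>\<in>{0..\<delta>1}. \<tau> \<delta> \<le> \<kappa> * \<delta>)"

text \<open>The inequality  f(xb,yb) \<le> max over Y \<inter> B_r(yb) of f(x,.)  is written as the existence
  of a point y' of that set with  f(xb,yb) \<le> f(x,y');  under the standing attainment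
  assumption this is the same as comparing with the attained maximum.\<close>

definition minimax_with_radius ::
  "'a::euclidean_space set \<Rightarrow> 'b::euclidean_space set \<Rightarrow> ('a \<Rightarrow> 'b \<Rightarrow> real) \<Rightarrow> 'a \<Rightarrow> 'b
   \<Rightarrow> (real \<Rightarrow> real) \<Rightarrow> bool" where
  "minimax_with_radius X Y f xb yb \<tau> \<longleftrightarrow>
     (\<exists>\<delta>0>0. \<forall>\<delta>\<in>{0<..\<delta>0}. \<forall>x\<in>X \<inter> cball xb \<delta>. \<forall>y\<in>Y \<inter> cball yb \<delta>.
        f xb y \<le> f xb yb \<and> (\<exists>y'\<in>Y \<inter> cball yb (\<tau> \<delta>). f xb yb \<le> f x y'))"

definition local_minimax ::
  "'a::euclidean_space set \<Rightarrow> 'b::euclidean_space set \<Rightarrow> ('a \<Rightarrow> 'b \<Rightarrow> real) \<Rightarrow> 'a \<Rightarrow> 'b \<Rightarrow> bool" where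
  "local_minimax X Y f xb yb \<longleftrightarrow> xb \<in> X \<and> yb \<in> Y \<and>
     (\<exists>\<tau>. radius_function \<tau> \<and> minimax_with_radius X Y f xb yb \<tau>)"

definition calm_local_minimax ::
  "'a::euclidean_space set \<Rightarrow> 'b::euclidean_space set \<Rightarrow> ('a \<Rightarrow> 'b \<Rightarrow> real) \<Rightarrow> 'a \<Rightarrow> 'b \<Rightarrow> bool" where
  "calm_local_minimax X Y f xb yb \<longleftrightarrow> xb \<in> X \<and> yb \<in> Y \<and>
     (\<exists>\<tau>. radius_function \<tau> \<and> calm_at_0 \<tau> \<and> minimax_with_radius X Y f xb yb \<tau>)"

abbreviation dir_filter :: "'z::real_normed_vector \<Rightarrow> (real \<times> 'z) filter" where
  "dir_filter w \<equiv> at_right 0 \<times>\<^sub>F nhds w"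

definition subderiv :: "('z::real_normed_vector \<Rightarrow> real) \<Rightarrow> 'z \<Rightarrow> 'z \<Rightarrow> ereal" where
  "subderiv \<psi> z w =
     Liminf (dir_filter w) (\<lambda>(t, w'). ereal ((\<psi> (z + t *\<^sub>R w') - \<psi> z) / t))"

definition semidifferentiable_at :: "('z::real_normed_vector \<Rightarrow> real) \<Rightarrow> 'z \<Rightarrow> bool" where
  "semidifferentiable_at \<psi> z \<longleftrightarrow>
     (\<forall>w. \<exists>L::real. ((\<lambda>(t, w'). (\<psi> (z + t *\<^sub>R w') - \<psi> z) / t) \<longlongrightarrow> L) (dir_filter w))"

text \<open>Second-order difference quotient; the first-order term d\<psi>(z)(w') is real-valued whenever
  \<psi> is semidifferentiable at z (the only situation in which it is used).\<close>
definition second_quot :: "('z::real_normed_vector \<Rightarrow> real) \<Rightarrow> 'z \<Rightarrow> real \<times> 'z \<Rightarrow> real" where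
  "second_quot \<psi> z = (\<lambda>(t, w').
     (\<psi> (z + t *\<^sub>R w') - \<psi> z - t * real_of_ereal (subderiv \<psi> z w')) / (t\<^sup>2 / 2))"

definition second_subderiv :: "('z::real_normed_vector \<Rightarrow> real) \<Rightarrow> 'z \<Rightarrow> 'z \<Rightarrow> ereal" where
  "second_subderiv \<psi> z w = Liminf (dir_filter w) (\<lambda>p. ereal (second_quot \<psi> z p))"

definition twice_semidifferentiable_at :: "('z::real_normed_vector \<Rightarrow> real) \<Rightarrow> 'z \<Rightarrow> bool" where
  "twice_semidifferentiable_at \<psi> z \<longleftrightarrow> semidifferentiable_at \<psi> z \<and>
     (\<forall>w. \<exists>L::real. (second_quot \<psi> z \<longlongrightarrow> L) (dir_filter w))"

definition tangent_cone :: "'z::real_normed_vector set \<Rightarrow> 'z \<Rightarrow> 'z set" where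
  "tangent_cone S z = {w. \<exists>t w'. (\<forall>k. t k > 0) \<and> t \<longlonglongrightarrow> 0 \<and> w' \<longlonglongrightarrow> w \<and>
                               (\<forall>k. z + t k *\<^sub>R w' k \<in> S)}"

text \<open>Second subderivative of the indicator of S at z relative to phi, in direction w; the Liminf over the empty (bottom) filter is +\<infinity>, as required.\<close>
definition second_subderiv_indicator ::
  "'z::real_normed_vector set \<Rightarrow> 'z \<Rightarrow> ('z \<Rightarrow> real) \<Rightarrow> 'z \<Rightarrow> ereal" where
  "second_subderiv_indicator S z \<phi> w =
     Liminf (inf (dir_filter w) (principal {(t, w'). z + t *\<^sub>R w' \<in> S}))
            (\<lambda>(t, w'). ereal (- 2 * \<phi> w' / t))"

end

theory Submission imports Defs begin

lemma Liminf_filter_anti: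
  fixes g :: "_ \<Rightarrow> 'b::complete_lattice"
  assumes "G \<le> F" shows "Liminf F g \<le> Liminf G g"
  unfolding Liminf_def
  apply (rule SUP_subset_mono)
  using assms by (auto simp: le_filter_def) 

lemma dir_nb: "dir_filter (w::'z::real_normed_vector) \<noteq> bot"
  by (simp add: prod_filter_eq_bot)

lemma embed_lim:
  "filterlim (\<lambda>(t::real, w::'b::real_normed_vector). (t, ((0::'a::real_normed_vector), w)))
     (dir_filter (0, h)) (dir_filter h)"
proof -
  have 1: "filterlim fst (at_right (0::real)) (dir_filter h)"
    using filtermap_fst_prod_filter unfolding filterlim_def by blast
  have 2: "filterlim snd (nhds h) (dir_filter h)"
    using filtermap_snd_prod_filter unfolding filterlim_def by blast
  have 3: "((\<lambda>p. ((0::'a), snd p)) \<longlongrightarrow> (0, h)) (dir_filter h)"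
    by (intro tendsto_intros 2)
  have "filterlim (\<lambda>p. (fst p, ((0::'a), snd p))) (dir_filter (0, h)) (dir_filter h)"
    by (rule filterlim_Pair[OF 1 3])
  then show ?thesis by (simp add: case_prod_beta')
qed


lemma key:
  fixes X :: "'a::euclidean_space set" and Y :: "'b::euclidean_space set"
    and f :: "'a \<Rightarrow> 'b \<Rightarrow> real" and xb :: 'a and yb :: 'b
  assumes ts: "twice_semidifferentiable_at (case_prod f) (xb, yb)"
    and hyp: "\<forall>h\<in>tangent_cone Y yb - {0}.
           second_subderiv (f xb) yb h
           - second_subderiv_indicator (X \<times> Y) (xb, yb)
               (\<lambda>w. real_of_ereal (subderiv (case_prod f) (xb, yb) w)) (0, h) < 0"
    and tpos: "\<forall>k. t k > 0" and t0: "t \<longlonglongrightarrow> 0" and u0: "u \<longlonglongrightarrow> 0" and vh: "v \<longlonglongrightarrow> h"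
    and hnz: "h \<noteq> 0"
    and memX: "\<forall>k. xb + t k *\<^sub>R u k \<in> X" and memY: "\<forall>k. yb + t k *\<^sub>R v k \<in> Y"
    and ge: "\<forall>k. f xb yb \<le> f (xb + t k *\<^sub>R u k) (yb + t k *\<^sub>R v k)"
  shows False
proof -
  define F where "F = case_prod f"
  define z where "z = (xb, yb)"
  obtain L2 where L2: "(second_quot F z \<longlongrightarrow> L2) (dir_filter (0, h))"
    using ts unfolding twice_semidifferentiable_at_def F_def z_def by blast
  have semi: "\<And>w. \<exists>L. ((\<lambda>(s, w'). (F (z + s *\<^sub>R w') - F z) / s) \<longlongrightarrow> L) (dir_filter w)"
    using ts unfolding twice_semidifferentiable_at_def semidifferentiable_at_def F_def z_def by blast
  have subeq: "subderiv (f xb) yb w = subderiv F z (0, w)" for w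
  proof -
    obtain L where L: "((\<lambda>(s, w'). (F (z + s *\<^sub>R w') - F z) / s) \<longlongrightarrow> L) (dir_filter (0, w))"
      using semi by blast
    have "subderiv F z (0, w) = ereal L"
      unfolding subderiv_def
      apply (rule lim_imp_Liminf)
      apply (rule dir_nb)
      using tendsto_ereal[OF L] by (simp add: case_prod_beta')
    moreover have "((\<lambda>(s, w'). (f xb (yb + s *\<^sub>R w') - f xb yb) / s) \<longlongrightarrow> L) (dir_filter w)"
    proof -
      have "((\<lambda>p. (\<lambda>(s, w'). (F (z + s *\<^sub>R w') - F z) / s) ((\<lambda>(s, w'). (s, (0::'a, w'))) p)) \<longlongrightarrow> L) (dir_filter w)"
        using filterlim_compose[OF L embed_lim] by (simp add: o_def)
      then show ?thesis by (simp add: case_prod_beta' F_def z_def)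
    qed
    then have "subderiv (f xb) yb w = ereal L"
      unfolding subderiv_def
      apply (intro lim_imp_Liminf)
      apply (rule dir_nb)
      using tendsto_ereal by (simp add: case_prod_beta')
    ultimately show ?thesis by simp
  qed
  have sq: "second_quot (f xb) yb = (\<lambda>(s, w'). second_quot F z (s, (0, w')))"
    by (rule ext) (auto simp: second_quot_def subeq F_def z_def)
  have A: "second_subderiv (f xb) yb h = ereal L2"
    unfolding second_subderiv_def
    apply (rule lim_imp_Liminf)
    apply (rule dir_nb)
    apply (rule tendsto_ereal)
    unfolding sq using filterlim_compose[OF L2 embed_lim] by (simp add: o_def case_prod_beta')
  define S where "S = {(s, w'). z + s *\<^sub>R w' \<in> X \<times> Y}"
  define g where "g = (\<lambda>(s::real, w'). ereal (- 2 * real_of_ereal (subderiv F z w') / s))"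
  define p where "p = (\<lambda>k. (t k, (u k, v k)))"
  have plim: "filterlim p (inf (dir_filter (0, h)) (principal S)) sequentially"
  proof -
    have 1: "filterlim t (at_right 0) sequentially"
      unfolding filterlim_at using t0 tpos by (auto intro!: always_eventually simp: less_imp_neq[symmetric])
    have 2: "((\<lambda>k. (u k, v k)) \<longlongrightarrow> (0, h)) sequentially"
      by (intro tendsto_intros u0 vh)
    have 3: "filterlim p (dir_filter (0, h)) sequentially"
      unfolding p_def by (rule filterlim_Pair[OF 1 2])
    have 4: "filterlim p (principal S) sequentially"
      using memX memY by (simp add: filterlim_principal p_def S_def z_def)
    show ?thesis using 3 4 by (simp add: filterlim_inf)
  qed
  have qlim: "((\<lambda>k. second_quot F z (p k)) \<longlongrightarrow> L2) sequentially"
    using filterlim_compose[OF L2] plim filterlim_inf by blast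
  have gle: "g (p k) \<le> ereal (second_quot F z (p k))" for k
  proof -
    define D where "D = real_of_ereal (subderiv F z (u k, v k))"
    define A where "A = F (z + t k *\<^sub>R (u k, v k)) - F z"
    have A0: "A \<ge> 0" using ge[rule_format, of k] by (simp add: A_def F_def z_def)
    have tk: "t k > 0" using tpos by simp
    have "- 2 * D / t k = (- t k * D) / ((t k)\<^sup>2 / 2)"
      using tk by (simp add: field_simps power2_eq_square)
    also have "\<dots> \<le> (A - t k * D) / ((t k)\<^sup>2 / 2)"
      using A0 tk by (intro divide_right_mono) auto
    finally show ?thesis
      by (simp add: g_def p_def second_quot_def D_def A_def)
  qed
  have B: "second_subderiv_indicator (X \<times> Y) (xb, yb)
               (\<lambda>w. real_of_ereal (subderiv (case_prod f) (xb, yb) w)) (0, h) \<le> ereal L2"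
  proof -
    have "second_subderiv_indicator (X \<times> Y) (xb, yb)
               (\<lambda>w. real_of_ereal (subderiv (case_prod f) (xb, yb) w)) (0, h)
          = Liminf (inf (dir_filter (0, h)) (principal S)) g"
      unfolding second_subderiv_indicator_def S_def g_def F_def z_def by simp
    also have "\<dots> \<le> Liminf (filtermap p sequentially) g"
      by (rule Liminf_filter_anti) (use plim in \<open>simp add: filterlim_def\<close>)
    also have "\<dots> \<le> Liminf sequentially (\<lambda>k. g (p k))"
      by (rule Liminf_filtermap_le)
    also have "\<dots> \<le> Liminf sequentially (\<lambda>k. ereal (second_quot F z (p k)))"
      by (rule Liminf_mono) (simp add: gle)
    also have "\<dots> = ereal L2"
      by (rule lim_imp_Liminf) (auto intro: tendsto_ereal qlim)
    finally show ?thesis .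
  qed
  have tc: "h \<in> tangent_cone Y yb - {0}"
    unfolding tangent_cone_def using tpos t0 vh memY hnz by blast
  have "second_subderiv (f xb) yb h
           - second_subderiv_indicator (X \<times> Y) (xb, yb)
               (\<lambda>w. real_of_ereal (subderiv (case_prod f) (xb, yb) w)) (0, h) < 0"
    using hyp tc by blast
  with A B show False
    by (cases "second_subderiv_indicator (X \<times> Y) (xb, yb)
               (\<lambda>w. real_of_ereal (subderiv (case_prod f) (xb, yb) w)) (0, h)") auto
qed


theorem mainTheorem7:
  fixes X :: "'a::euclidean_space set" and Y :: "'b::euclidean_space set"
    and f :: "'a \<Rightarrow> 'b \<Rightarrow> real" and xb :: 'a and yb :: 'b
  assumes "X \<noteq> {}" and "closed X" and "Y \<noteq> {}" and "closed Y"
    and standing: "\<forall>x\<in>X. \<forall>y0\<in>Y. \<forall>\<epsilon>\<ge>0. \<exists>y\<in>Y \<inter> cball y0 \<epsilon>.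
                      \<forall>y'\<in>Y \<inter> cball y0 \<epsilon>. f x y' \<le> f x y"
    and "local_minimax X Y f xb yb"
    and "twice_semidifferentiable_at (case_prod f) (xb, yb)"
    and "\<forall>h\<in>tangent_cone Y yb - {0}.
           second_subderiv (f xb) yb h
           - second_subderiv_indicator (X \<times> Y) (xb, yb)
               (\<lambda>w. real_of_ereal (subderiv (case_prod f) (xb, yb) w)) (0, h) < 0"
  shows "calm_local_minimax X Y f xb yb"
proof -
  from assms(6) obtain \<tau> where xbX: "xb \<in> X" and ybY: "yb \<in> Y" and rf: "radius_function \<tau>"
    and mm: "minimax_with_radius X Y f xb yb \<tau>"
    unfolding local_minimax_def by blast
  from mm obtain \<delta>0 where d0: "\<delta>0 > 0" and mm0: "\<forall>\<delta>\<in>{0<..\<delta>0}. \<forall>x\<in>X \<inter> cball xb \<delta>. \<forall>y\<in>Y \<inter> cball yb \<delta>.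
        f xb y \<le> f xb yb \<and> (\<exists>y'\<in>Y \<inter> cball yb (\<tau> \<delta>). f xb yb \<le> f x y')"
    unfolding minimax_with_radius_def by blast
  have C: "\<exists>\<kappa>>0. \<exists>\<delta>1>0. \<forall>x\<in>X. norm (x - xb) \<le> \<delta>1 \<longrightarrow>
             (\<exists>y'\<in>Y. norm (y' - yb) \<le> \<kappa> * norm (x - xb) \<and> f xb yb \<le> f x y')"
  proof (rule ccontr)
    assume nC: "\<not> ?thesis"
    have "\<forall>n::nat. \<exists>x. x \<in> X \<and> norm (x - xb) \<le> min \<delta>0 (1 / (real n + 1)) \<and>
        \<not> (\<exists>y'\<in>Y. norm (y' - yb) \<le> (real n + 1) * norm (x - xb) \<and> f xb yb \<le> f x y')"
    proof
      fix n :: nat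
      have "real n + 1 > 0" "min \<delta>0 (1 / (real n + 1)) > 0" using d0 by auto
      then show "\<exists>x. x \<in> X \<and> norm (x - xb) \<le> min \<delta>0 (1 / (real n + 1)) \<and>
        \<not> (\<exists>y'\<in>Y. norm (y' - yb) \<le> (real n + 1) * norm (x - xb) \<and> f xb yb \<le> f x y')"
        using nC by blast
    qed
    then obtain x where xX: "\<And>n. x n \<in> X" and xd: "\<And>n. norm (x n - xb) \<le> min \<delta>0 (1 / (real n + 1))"
      and xbad: "\<And>n. \<not> (\<exists>y'\<in>Y. norm (y' - yb) \<le> (real n + 1) * norm (x n - xb) \<and> f xb yb \<le> f (x n) y')"
      by metis
    define d where "d n = norm (x n - xb)" for n
    have dpos: "d n > 0" for n
    proof (rule ccontr)
      assume "\<not> d n > 0"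
      then have "x n = xb" by (simp add: d_def)
      then show False using xbad[of n] ybY by auto
    qed
    have "\<forall>n. \<exists>y. y \<in> Y \<and> dist yb y \<le> \<tau> (d n) \<and> f xb yb \<le> f (x n) y"
    proof
      fix n
      have "d n \<in> {0<..\<delta>0}" using dpos xd[of n] by (auto simp: d_def)
      moreover have "x n \<in> X \<inter> cball xb (d n)" using xX by (simp add: d_def dist_norm norm_minus_commute)
      moreover have "yb \<in> Y \<inter> cball yb (d n)" using ybY dpos[of n] by simp
      ultimately show "\<exists>y. y \<in> Y \<and> dist yb y \<le> \<tau> (d n) \<and> f xb yb \<le> f (x n) y"
        using mm0 by fastforce
    qed
    then obtain y where yY: "\<And>n. y n \<in> Y" and yt: "\<And>n. dist yb (y n) \<le> \<tau> (d n)"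
      and yge: "\<And>n. f xb yb \<le> f (x n) (y n)"
      by metis
    define s where "s n = norm (y n - yb)" for n
    have sbig: "s n > (real n + 1) * d n" for n
      using xbad[of n] yY[of n] yge[of n] unfolding s_def d_def by force
    have spos: "s n > 0" for n
      using sbig[of n] dpos[of n] by (smt (verit) mult_pos_pos of_nat_0_le_iff)
    have d0lim: "d \<longlonglongrightarrow> 0"
    proof (rule tendsto_sandwich[of "\<lambda>_. 0" _ _ "\<lambda>n. inverse (real (Suc n))"])
      show "\<forall>\<^sub>F n in sequentially. 0 \<le> d n" using dpos by (auto intro: always_eventually less_imp_le)
      show "\<forall>\<^sub>F n in sequentially. d n \<le> inverse (real (Suc n))"
        using xd by (auto intro!: always_eventually simp: d_def divide_inverse add.commute)
    qed (use LIMSEQ_inverse_real_of_nat in \<open>simp_all add: add.commute\<close>)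
    have dat: "filterlim d (at_right 0) sequentially"
      unfolding filterlim_at using d0lim dpos by (auto intro!: always_eventually simp: less_imp_neq[symmetric])
    have taulim: "((\<lambda>n. \<tau> (d n)) \<longlongrightarrow> 0) sequentially"
      using rf filterlim_compose[OF _ dat] unfolding radius_function_def by blast
    have s0: "s \<longlonglongrightarrow> 0"
    proof (rule tendsto_sandwich[of "\<lambda>_. 0" _ _ "\<lambda>n. \<tau> (d n)"])
      show "\<forall>\<^sub>F n in sequentially. 0 \<le> s n" by (simp add: s_def)
      show "\<forall>\<^sub>F n in sequentially. s n \<le> \<tau> (d n)"
        using yt by (auto intro!: always_eventually simp: s_def dist_norm norm_minus_commute)
    qed (auto intro: taulim)
    define u where "u n = inverse (s n) *\<^sub>R (x n - xb)" for n
    define v where "v n = inverse (s n) *\<^sub>R (y n - yb)" for n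
    have nu: "norm (u n) \<le> inverse (real (Suc n))" for n
    proof -
      have "norm (u n) = d n / s n" using spos[of n] by (simp add: u_def d_def divide_inverse mult.commute)
      also have "\<dots> \<le> inverse (real (Suc n))"
        using sbig[of n] spos[of n] dpos[of n]
        by (simp add: divide_simps field_simps)
      finally show ?thesis .
    qed
    have u0: "u \<longlonglongrightarrow> 0"
    proof -
      have "(\<lambda>n. norm (u n)) \<longlonglongrightarrow> 0"
      proof (rule tendsto_sandwich[of "\<lambda>_. 0" _ _ "\<lambda>n. inverse (real (Suc n))"])
        show "\<forall>\<^sub>F n in sequentially. 0 \<le> norm (u n)" by simp
        show "\<forall>\<^sub>F n in sequentially. norm (u n) \<le> inverse (real (Suc n))" using nu by simp
      qed (use LIMSEQ_inverse_real_of_nat in \<open>simp_all add: add.commute\<close>)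
      then show ?thesis using tendsto_norm_zero_iff by blast
    qed
    have vS: "\<forall>n. v n \<in> sphere 0 1"
      using spos by (simp add: v_def s_def)
    obtain l r where lS: "l \<in> sphere (0::'b) 1" and r: "strict_mono (r :: nat \<Rightarrow> nat)"
      and vl: "(v \<circ> r) \<longlonglongrightarrow> l"
      using seq_compactE[OF compact_imp_seq_compact[OF compact_sphere] vS] by metis
    have xeq: "xb + s n *\<^sub>R u n = x n" for n using spos[of n] by (simp add: u_def)
    have yeq: "yb + s n *\<^sub>R v n = y n" for n using spos[of n] by (simp add: v_def)
    show False
    proof (rule key[of f xb yb Y X "s \<circ> r" "u \<circ> r" "v \<circ> r" l])
      show "twice_semidifferentiable_at (case_prod f) (xb, yb)" by (rule assms(7))
      show "\<forall>h\<in>tangent_cone Y yb - {0}.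
           second_subderiv (f xb) yb h
           - second_subderiv_indicator (X \<times> Y) (xb, yb)
               (\<lambda>w. real_of_ereal (subderiv (case_prod f) (xb, yb) w)) (0, h) < 0" by (rule assms(8))
      show "\<forall>k. (s \<circ> r) k > 0" using spos by simp
      show "(s \<circ> r) \<longlonglongrightarrow> 0" by (rule LIMSEQ_subseq_LIMSEQ[OF s0 r])
      show "(u \<circ> r) \<longlonglongrightarrow> 0" by (rule LIMSEQ_subseq_LIMSEQ[OF u0 r])
      show "(v \<circ> r) \<longlonglongrightarrow> l" by (rule vl)
      show "l \<noteq> 0" using lS by auto
      show "\<forall>k. xb + (s \<circ> r) k *\<^sub>R (u \<circ> r) k \<in> X" using xeq xX by simp
      show "\<forall>k. yb + (s \<circ> r) k *\<^sub>R (v \<circ> r) k \<in> Y" using yeq yY by simp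
      show "\<forall>k. f xb yb \<le> f (xb + (s \<circ> r) k *\<^sub>R (u \<circ> r) k) (yb + (s \<circ> r) k *\<^sub>R (v \<circ> r) k)"
        using xeq yeq yge by simp
    qed
  qed
  then obtain \<kappa> \<delta>1 where k: "\<kappa> > 0" and d1: "\<delta>1 > 0" and C1: "\<forall>x\<in>X. norm (x - xb) \<le> \<delta>1 \<longrightarrow>
             (\<exists>y'\<in>Y. norm (y' - yb) \<le> \<kappa> * norm (x - xb) \<and> f xb yb \<le> f x y')" by blast
  define \<tau>' where "\<tau>' = (\<lambda>\<delta>::real. \<kappa> * \<delta>)"
  have "radius_function \<tau>'"
  proof -
    have "((\<lambda>\<delta>::real. \<kappa> * \<delta>) \<longlongrightarrow> \<kappa> * 0) (at_right 0)" by (intro tendsto_intros)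
    then show ?thesis unfolding radius_function_def \<tau>'_def using k by simp
  qed
  moreover have "calm_at_0 \<tau>'"
    unfolding calm_at_0_def \<tau>'_def using k d1 by auto
  moreover have "minimax_with_radius X Y f xb yb \<tau>'"
    unfolding minimax_with_radius_def
  proof (intro exI[of _ "min \<delta>0 \<delta>1"] conjI ballI)
    show "min \<delta>0 \<delta>1 > 0" using d0 d1 by simp
    fix \<delta> x y assume dl: "\<delta> \<in> {0<..min \<delta>0 \<delta>1}" and x: "x \<in> X \<inter> cball xb \<delta>" and y: "y \<in> Y \<inter> cball yb \<delta>"
    show "f xb y \<le> f xb yb" using mm0 dl x y by auto
    have nx: "norm (x - xb) \<le> \<delta>" using x by (simp add: dist_norm norm_minus_commute)
    then obtain y' where "y' \<in> Y" "norm (y' - yb) \<le> \<kappa> * norm (x - xb)" "f xb yb \<le> f x y'"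
      using C1 x dl by (meson IntD1 greaterThanAtMost_iff min.boundedE order_trans)
    moreover have "\<kappa> * norm (x - xb) \<le> \<kappa> * \<delta>" using nx k by simp
    ultimately show "\<exists>y'\<in>Y \<inter> cball yb (\<tau>' \<delta>). f xb yb \<le> f x y'"
      by (intro bexI[of _ y']) (auto simp: \<tau>'_def dist_norm norm_minus_commute)
  qed
  ultimately show ?thesis unfolding calm_local_minimax_def using xbX ybY by blast
qed

end
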